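(* Let $C$ be a field, let $W$ be a $C$-vector space of finite dimension $r=\dim W$, and let $n\geq 1$ and $\ell\leq r$ be positive integers. Suppose that for each $i=1,\dots,n$ we are given subspaces $W_{i,1},\dots,W_{i,\ell}$ of $W$ such that $W=W_{i,1}\oplus W_{i,2}\oplus\cdots\oplus W_{i,\ell}$ (direct sum). For a tuple $\mathbf j=(j_1,\dots,j_n)\in\{1,\dots,\ell\}^n$ put $W_{\mathbf j}:=W_{1,j_1}\cap W_{2,j_2}\cap\cdots\cap W_{n,j_n}$. Then there are at most $r$ distinct tuples $\mathbf j\in\{1,\dots,\ell\}^n$ such that $W_{\mathbf j}\neq\{0\}$.
   Context: In the paper $C$ is an algebraically closed subfield of $\mathbb C$; the lemma is a statement of linear algebra over $C$. *)

theory Defs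
  imports Complex_Main "HOL-Library.FuncSet"
begin

definition is_direct_sum ::
  "('a::field \<Rightarrow> 'v::ab_group_add \<Rightarrow> 'v) \<Rightarrow> (nat \<Rightarrow> 'v set) \<Rightarrow> nat \<Rightarrow> bool" where
  "is_direct_sum scale U l \<longleftrightarrow>
     (\<forall>j\<in>{1..l}. module.subspace scale (U j)) \<and>
     (\<forall>w. \<exists>!u. u \<in> ({1..l} \<rightarrow>\<^sub>E UNIV) \<and> (\<forall>j\<in>{1..l}. u j \<in> U j) \<and> w = (\<Sum>j\<in>{1..l}. u j))"

end

theory Submission
  imports Defs
begin

definition dproj :: "(nat \<Rightarrow> 'v::ab_group_add set) \<Rightarrow> nat \<Rightarrow> 'v \<Rightarrow> nat \<Rightarrow> 'v" where
  "dproj U l w = (THE u. u \<in> ({1..l} \<rightarrow>\<^sub>E UNIV) \<and> (\<forall>j\<in>{1..l}. u j \<in> U j) \<and> w = (\<Sum>j\<in>{1..l}. u j))"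

lemma dproj_prop:
  assumes "is_direct_sum scale U l"
  shows "dproj U l w \<in> ({1..l} \<rightarrow>\<^sub>E UNIV) \<and> (\<forall>j\<in>{1..l}. dproj U l w j \<in> U j) \<and> w = (\<Sum>j\<in>{1..l}. dproj U l w j)"
proof -
  have "\<exists>!u. u \<in> ({1..l} \<rightarrow>\<^sub>E UNIV) \<and> (\<forall>j\<in>{1..l}. u j \<in> U j) \<and> w = (\<Sum>j\<in>{1..l}. u j)"
    using assms by (simp add: is_direct_sum_def)
  then show ?thesis unfolding dproj_def by (rule theI')
qed

lemma dproj_unique:
  assumes "is_direct_sum scale U l"
    and "u \<in> ({1..l} \<rightarrow>\<^sub>E UNIV)" "\<forall>j\<in>{1..l}. u j \<in> U j" "w = (\<Sum>j\<in>{1..l}. u j)"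
  shows "dproj U l w = u"
  unfolding dproj_def
  by (rule the1_equality) (use assms in \<open>auto simp: is_direct_sum_def\<close>)

lemma dproj_add:
  assumes m: "module scale" and ds: "is_direct_sum scale U l" and k: "k \<in> {1..l}"
  shows "dproj U l (x + y) k = dproj U l x k + dproj U l y k"
proof -
  let ?u = "dproj U l x" and ?v = "dproj U l y"
  let ?w = "\<lambda>j\<in>{1..l}. ?u j + ?v j"
  have px: "?u \<in> ({1..l} \<rightarrow>\<^sub>E UNIV) \<and> (\<forall>j\<in>{1..l}. ?u j \<in> U j) \<and> x = (\<Sum>j\<in>{1..l}. ?u j)"
    by (rule dproj_prop[OF ds])
  have py: "?v \<in> ({1..l} \<rightarrow>\<^sub>E UNIV) \<and> (\<forall>j\<in>{1..l}. ?v j \<in> U j) \<and> y = (\<Sum>j\<in>{1..l}. ?v j)"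
    by (rule dproj_prop[OF ds])
  have sub: "\<forall>j\<in>{1..l}. module.subspace scale (U j)" using ds by (simp add: is_direct_sum_def)
  have "dproj U l (x + y) = ?w"
  proof (rule dproj_unique[OF ds])
    show "?w \<in> ({1..l} \<rightarrow>\<^sub>E UNIV)" by simp
    show "\<forall>j\<in>{1..l}. ?w j \<in> U j"
      using px py sub module.subspace_add[OF m] by simp
    show "x + y = (\<Sum>j\<in>{1..l}. ?w j)"
      using px py by (simp add: sum.distrib)
  qed
  then show ?thesis using k by simp
qed

lemma dproj_in:
  assumes m: "module scale" and ds: "is_direct_sum scale U l" and k: "k \<in> {1..l}" and k': "k' \<in> {1..l}"
    and x: "x \<in> U k'"
  shows "dproj U l x k = (if k = k' then x else 0)"
proof -
  let ?w = "\<lambda>j\<in>{1..l}. if j = k' then x else 0"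
  have sub: "\<forall>j\<in>{1..l}. module.subspace scale (U j)" using ds by (simp add: is_direct_sum_def)
  have "dproj U l x = ?w"
  proof (rule dproj_unique[OF ds])
    show "?w \<in> ({1..l} \<rightarrow>\<^sub>E UNIV)" by simp
    show "\<forall>j\<in>{1..l}. ?w j \<in> U j"
      using x sub module.subspace_0[OF m] by simp
    have "(\<Sum>j\<in>{1..l}. ?w j) = (\<Sum>j\<in>{1..l}. if j = k' then x else 0)"
      by (rule sum.cong) auto
    also have "\<dots> = x" using k' by (simp add: sum.delta)
    finally show "x = (\<Sum>j\<in>{1..l}. ?w j)" by simp
  qed
  then show ?thesis using k by simp
qed

fun Qm :: "(nat \<Rightarrow> nat \<Rightarrow> 'v::ab_group_add set) \<Rightarrow> nat \<Rightarrow> (nat \<Rightarrow> nat) \<Rightarrow> nat \<Rightarrow> 'v \<Rightarrow> 'v" where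
  "Qm W l j0 0 x = x"
| "Qm W l j0 (Suc m) x = dproj (W (Suc m)) l (Qm W l j0 m x) (j0 (Suc m))"

lemma Qm_add:
  assumes m: "module scale" and ds: "\<forall>i\<in>{1..n}. is_direct_sum scale (W i) l"
    and j0: "j0 \<in> {1..n} \<rightarrow>\<^sub>E {1..l}"
  shows "mm \<le> n \<Longrightarrow> Qm W l j0 mm (x + y) = Qm W l j0 mm x + Qm W l j0 mm y"
proof (induction mm)
  case 0 then show ?case by simp
next
  case (Suc mm)
  have "is_direct_sum scale (W (Suc mm)) l" using ds Suc.prems by simp
  moreover have "j0 (Suc mm) \<in> {1..l}" using j0 Suc.prems by auto
  ultimately show ?case using Suc dproj_add[OF m] by simp
qed

lemma Qm_zero:
  assumes m: "module scale" and ds: "\<forall>i\<in>{1..n}. is_direct_sum scale (W i) l"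
    and j0: "j0 \<in> {1..n} \<rightarrow>\<^sub>E {1..l}" and mm: "mm \<le> n"
  shows "Qm W l j0 mm 0 = 0"
proof -
  have "Qm W l j0 mm (0 + 0) = Qm W l j0 mm 0 + Qm W l j0 mm 0"
    by (rule Qm_add[OF m ds j0 mm])
  then show ?thesis by simp
qed

lemma Qm_sum:
  assumes m: "module scale" and ds: "\<forall>i\<in>{1..n}. is_direct_sum scale (W i) l"
    and j0: "j0 \<in> {1..n} \<rightarrow>\<^sub>E {1..l}" and mm: "mm \<le> n"
  shows "Qm W l j0 mm (\<Sum>j\<in>S. f j) = (\<Sum>j\<in>S. Qm W l j0 mm (f j))"
proof (induction S rule: infinite_finite_induct)
  case (infinite A) then show ?case using Qm_zero[OF m ds j0 mm] by simp
next
  case empty then show ?case using Qm_zero[OF m ds j0 mm] by simp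
next
  case (insert a A) then show ?case using Qm_add[OF m ds j0 mm] by simp
qed

lemma Qm_in:
  assumes m: "module scale" and ds: "\<forall>i\<in>{1..n}. is_direct_sum scale (W i) l"
    and j0: "j0 \<in> {1..n} \<rightarrow>\<^sub>E {1..l}" and j: "j \<in> {1..n} \<rightarrow>\<^sub>E {1..l}"
    and x: "x \<in> (\<Inter>i\<in>{1..n}. W i (j i))"
  shows "mm \<le> n \<Longrightarrow> Qm W l j0 mm x = (if \<forall>i\<in>{1..mm}. j i = j0 i then x else 0)"
proof (induction mm)
  case 0 then show ?case by simp
next
  case (Suc mm)
  have dsS: "is_direct_sum scale (W (Suc mm)) l" using ds Suc.prems by simp
  have j0S: "j0 (Suc mm) \<in> {1..l}" using j0 Suc.prems by auto
  have jS: "j (Suc mm) \<in> {1..l}" using j Suc.prems by auto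
  have xS: "x \<in> W (Suc mm) (j (Suc mm))" using x Suc.prems by auto
  show ?case
  proof (cases "\<forall>i\<in>{1..mm}. j i = j0 i")
    case True
    then have "Qm W l j0 mm x = x" using Suc True by simp
    then have "Qm W l j0 (Suc mm) x = (if j0 (Suc mm) = j (Suc mm) then x else 0)"
      using dproj_in[OF m dsS j0S jS xS] by simp
    moreover have "(\<forall>i\<in>{1..Suc mm}. j i = j0 i) = (j (Suc mm) = j0 (Suc mm))"
      using True by (auto simp: le_Suc_eq)
    ultimately show ?thesis by auto
  next
    case False
    then have "Qm W l j0 mm x = 0" using Suc.IH Suc.prems False by auto
    moreover have "dproj (W (Suc mm)) l 0 (j0 (Suc mm)) = 0"
    proof -
      have "dproj (W (Suc mm)) l (0 + 0) (j0 (Suc mm)) =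
            dproj (W (Suc mm)) l 0 (j0 (Suc mm)) + dproj (W (Suc mm)) l 0 (j0 (Suc mm))"
        by (rule dproj_add[OF m dsS j0S])
      then show ?thesis by simp
    qed
    moreover have "\<not> (\<forall>i\<in>{1..Suc mm}. j i = j0 i)" using False by auto
    ultimately show ?thesis by (simp del: bex_simps; blast)
  qed
qed

lemma key:
  fixes W :: "nat \<Rightarrow> nat \<Rightarrow> 'v::ab_group_add set"
  assumes m: "module scale" and ds: "\<forall>i\<in>{1..n}. is_direct_sum scale (W i) l"
    and S: "S \<subseteq> {1..n} \<rightarrow>\<^sub>E {1..l}" and fin: "finite S"
    and w: "\<forall>j\<in>S. w j \<in> (\<Inter>i\<in>{1..n}. W i (j i))"
    and s0: "(\<Sum>j\<in>S. w j) = 0" and j0: "j0 \<in> S"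
  shows "w j0 = 0"
proof -
  have j0P: "j0 \<in> {1..n} \<rightarrow>\<^sub>E {1..l}" using S j0 by auto
  have "Qm W l j0 n (\<Sum>j\<in>S. w j) = (\<Sum>j\<in>S. Qm W l j0 n (w j))"
    by (rule Qm_sum[OF m ds j0P order_refl])
  also have "\<dots> = (\<Sum>j\<in>S. if j = j0 then w j else 0)"
  proof (rule sum.cong)
    fix j assume jS: "j \<in> S"
    have jP: "j \<in> {1..n} \<rightarrow>\<^sub>E {1..l}" using S jS by auto
    have eq: "(\<forall>i\<in>{1..n}. j i = j0 i) = (j = j0)"
      using jP j0P by (auto intro: PiE_ext)
    show "Qm W l j0 n (w j) = (if j = j0 then w j else 0)"
      using Qm_in[OF m ds j0P jP, of "w j" n] w jS eq by simp
  qed simp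
  also have "\<dots> = w j0" using fin j0 by (simp add: sum.delta)
  finally show ?thesis using s0 Qm_zero[OF m ds j0P order_refl] by simp
qed

theorem lemma1:
  fixes scale :: "'a::field \<Rightarrow> 'v::ab_group_add \<Rightarrow> 'v"
    and Basis :: "'v set"
    and Wsub :: "nat \<Rightarrow> nat \<Rightarrow> 'v set"
    and n l r :: nat
  assumes fd: "finite_dimensional_vector_space scale Basis"
    and r_def: "r = vector_space.dim scale (UNIV :: 'v set)"
    and n_pos: "n \<ge> 1"
    and l_pos: "l \<ge> 1"
    and l_le: "l \<le> r"
    and dsum: "\<forall>i\<in>{1..n}. is_direct_sum scale (Wsub i) l"
  shows "card {j \<in> {1..n} \<rightarrow>\<^sub>E {1..l}. (\<Inter>i\<in>{1..n}. Wsub i (j i)) \<noteq> {0}} \<le> r"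
proof -
  interpret fdv: finite_dimensional_vector_space scale Basis by (rule fd)
  have m: "module scale" by unfold_locales
  define S where "S = {j \<in> {1..n} \<rightarrow>\<^sub>E {1..l}. (\<Inter>i\<in>{1..n}. Wsub i (j i)) \<noteq> {0}}"
  have SP: "S \<subseteq> {1..n} \<rightarrow>\<^sub>E {1..l}" by (auto simp: S_def)
  have finS: "finite S" using SP by (rule finite_subset) (simp add: finite_PiE)
  have sub: "\<And>i k. i \<in> {1..n} \<Longrightarrow> k \<in> {1..l} \<Longrightarrow> fdv.subspace (Wsub i k)"
    using dsum by (simp add: is_direct_sum_def)
  have zero_in: "\<And>j. j \<in> S \<Longrightarrow> 0 \<in> (\<Inter>i\<in>{1..n}. Wsub i (j i))"
    using sub fdv.subspace_0 SP by blast
  define v where "v j = (SOME x. x \<in> (\<Inter>i\<in>{1..n}. Wsub i (j i)) \<and> x \<noteq> 0)" for j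
  have v: "v j \<in> (\<Inter>i\<in>{1..n}. Wsub i (j i)) \<and> v j \<noteq> 0" if "j \<in> S" for j
  proof -
    have "\<exists>x. x \<in> (\<Inter>i\<in>{1..n}. Wsub i (j i)) \<and> x \<noteq> 0"
      using that zero_in[OF that] unfolding S_def by blast
    then show ?thesis unfolding v_def by (rule someI_ex)
  qed
  have inj: "inj_on v S"
  proof (rule inj_onI, rule ccontr)
    fix a b assume a: "a \<in> S" and b: "b \<in> S" and eq: "v a = v b" and ne: "a \<noteq> b"
    define w where "w j = (if j = a then v a else - v b)" for j
    have "\<forall>j\<in>{a, b}. w j \<in> (\<Inter>i\<in>{1..n}. Wsub i (j i))"
    proof
      fix j assume "j \<in> {a, b}"
      then show "w j \<in> (\<Inter>i\<in>{1..n}. Wsub i (j i))"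
      proof
        assume "j = a" then show ?thesis using v[OF a] by (simp add: w_def)
      next
        assume jb: "j \<in> {b}"
        have "- v b \<in> (\<Inter>i\<in>{1..n}. Wsub i (b i))"
        proof
          fix i assume i: "i \<in> {1..n}"
          have "b \<in> {1..n} \<rightarrow>\<^sub>E {1..l}" using SP b by blast
          then have "b i \<in> {1..l}" using i by blast
          then show "- v b \<in> Wsub i (b i)"
            using fdv.subspace_neg[OF sub[OF i]] v[OF b] i by auto
        qed
        then show ?thesis using jb ne by (simp add: w_def)
      qed
    qed
    moreover have "(\<Sum>j\<in>{a, b}. w j) = 0" using ne eq by (simp add: w_def)
    ultimately have "w a = 0"
      using key[OF m dsum, of "{a,b}" w a] SP a b by auto
    then show False using v[OF a] by (simp add: w_def)
  qed
  have indep: "\<not> fdv.dependent (v ` S)"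
  proof
    assume "fdv.dependent (v ` S)"
    then obtain t u where t: "finite t" "t \<subseteq> v ` S" "(\<Sum>x\<in>t. scale (u x) x) = 0"
      and x0: "\<exists>x\<in>t. u x \<noteq> 0"
      unfolding fdv.dependent_explicit by blast
    define S' where "S' = {j \<in> S. v j \<in> t}"
    have tS': "t = v ` S'" using t(2) by (auto simp: S'_def)
    have injS': "inj_on v S'" using inj by (rule inj_on_subset) (auto simp: S'_def)
    have "(\<Sum>j\<in>S'. scale (u (v j)) (v j)) = 0"
      using t(3) unfolding tS' by (simp add: sum.reindex[OF injS'])
    moreover have "\<forall>j\<in>S'. scale (u (v j)) (v j) \<in> (\<Inter>i\<in>{1..n}. Wsub i (j i))"
    proof (intro ballI INT_I)
      fix j i assume j: "j \<in> S'" and i: "i \<in> {1..n}"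
      have jS: "j \<in> S" using j by (simp add: S'_def)
      have "j \<in> {1..n} \<rightarrow>\<^sub>E {1..l}" using SP jS by blast
      then have "j i \<in> {1..l}" using i by blast
      then show "scale (u (v j)) (v j) \<in> Wsub i (j i)"
        using fdv.subspace_scale[OF sub[OF i]] v[OF jS] i by auto
    qed
    moreover have "S' \<subseteq> {1..n} \<rightarrow>\<^sub>E {1..l}" "finite S'"
      using SP finS by (auto simp: S'_def)
    moreover obtain j0 where j0: "j0 \<in> S'" "u (v j0) \<noteq> 0" using x0 tS' by auto
    ultimately have "scale (u (v j0)) (v j0) = 0"
      using key[OF m dsum, of S' "\<lambda>j. scale (u (v j)) (v j)" j0] by blast
    then show False using j0 v[of j0] by (auto simp: S'_def)
  qed
  have "card S = card (v ` S)" by (simp add: card_image[OF inj])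
  also have "\<dots> \<le> fdv.dim UNIV" by (rule fdv.independent_card_le_dim) (auto simp: indep)
  finally show ?thesis using r_def S_def by simp
qed

end
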